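(* Let $m_{\max}$ be the maximum covering number of the compact query space $\mathcal{X}$ at radius $\epsilon$, so $m_{\max}\le(D\sqrt{d_e}/\epsilon)^{d_e}$ with $D$ the diameter. The total number of cache switches triggered by CLCB-SC-LS-Cont up to horizon $T$ satisfies $$\mathbb{E}\Big[\sum_{u\in\mathcal{S}_T}\tau_u(T)\Big]\le\mathcal{O}(m_{\max}\log\log T),\qquad\mathbb{E}[\tau_f(T)]\le\mathcal{O}(\log\log T).$$
   Context: CLCB-SC-LS-Cont (radius $\epsilon$, horizon $T$) maintains a growing set of centers $\mathcal{S}_t\subset\mathcal{X}\subset\mathbb{R}^{d_e}$: an arriving query farther than $\epsilon$ from all centers becomes a new center, otherwise it is mapped to its nearest center; $m_t=|\mathcal{S}_t|$. Each center $u$ has a local stage index $\tau_u$ (starting at 1); $\mathcal{T}(u,\tau)$ is the set of rounds in stage $\tau$ of $u$ at which the LLM was queried on a query mapped to $u$; stage $\tau_u$ ends and $\tau_u$ increases by one when $|\mathcal{T}(u,\tau_u)|\ge1+\sqrt{\frac{T}{m_t}\sum_{\tau<\tau_u}|\mathcal{T}(u,\tau)|}$. A global stage index $\tau_f$ with sets $\mathcal{T}(f,\tau)$ of all arrival rounds in stage $\tau$ increases when $|\mathcal{T}(f,\tau_f)|\ge1+\sqrt{T\sum_{\tau<\tau_f}|\mathcal{T}(f,\tau)|}$. Cache switches occur exactly at stage increments (and at center creations). $\tau_u(T),\tau_f(T)$ are the stage indices at time $T$. *)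

theory Defs
  imports "HOL-Probability.Probability"
begin

text \<open>Queries live in R^d, represented as functions nat => real vanishing from index d on
  (the product topology on nat => real restricts to the Euclidean topology there).\<close>

definition edist :: "nat \<Rightarrow> (nat \<Rightarrow> real) \<Rightarrow> (nat \<Rightarrow> real) \<Rightarrow> real" where
  "edist d x y = sqrt (\<Sum>i<d. (x i - y i)^2)"

text \<open>Maximal number of centers the greedy epsilon-net procedure can create in X:
  the maximal cardinality of a subset of X whose points are pairwise more than epsilon apart.\<close>
definition mmax :: "nat \<Rightarrow> (nat \<Rightarrow> real) set \<Rightarrow> real \<Rightarrow> nat" where
  "mmax d X \<epsilon> = Sup {card S | S. finite S \<and> S \<subseteq> X \<and>
       (\<forall>x\<in>S. \<forall>y\<in>S. x \<noteq> y \<longrightarrow> edist d x y > \<epsilon>)}"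

record cstate =
  cs :: "(nat \<Rightarrow> real) list"   \<comment> \<open>centers in order of creation\<close>
  tu :: "nat list"                \<comment> \<open>local stage index of each center\<close>
  cu :: "nat list"                \<comment> \<open>size of current local stage set T(u,tau_u)\<close>
  su :: "nat list"                \<comment> \<open>sum of sizes of previous local stages\<close>
  tf :: nat                       \<comment> \<open>global stage index\<close>
  cf :: nat                       \<comment> \<open>size of current global stage set\<close>
  sf :: nat                       \<comment> \<open>sum of sizes of previous global stages\<close>

definition init_state :: cstate where
  "init_state = \<lparr>cs = [], tu = [], cu = [], su = [], tf = 1, cf = 0, sf = 0\<rparr>"

definition is_new :: "nat \<Rightarrow> real \<Rightarrow> (nat \<Rightarrow> real) list \<Rightarrow> (nat \<Rightarrow> real) \<Rightarrow> bool" where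
  "is_new d \<epsilon> C x = (\<forall>c\<in>set C. edist d x c > \<epsilon>)"

definition nearest :: "nat \<Rightarrow> (nat \<Rightarrow> real) list \<Rightarrow> (nat \<Rightarrow> real) \<Rightarrow> nat" where
  "nearest d C x = (LEAST i. i < length C \<and> (\<forall>j<length C. edist d x (C!i) \<le> edist d x (C!j)))"

definition add_center :: "(nat \<Rightarrow> real) \<Rightarrow> cstate \<Rightarrow> cstate" where
  "add_center x st = st\<lparr>cs := cs st @ [x], tu := tu st @ [1], cu := cu st @ [0], su := su st @ [0]\<rparr>"

text \<open>LLM queried on a query mapped to center number i (m_t = current number of centers).\<close>
definition local_upd :: "nat \<Rightarrow> nat \<Rightarrow> cstate \<Rightarrow> cstate" where
  "local_upd T i st = (let m = length (cs st); c = cu st ! i + 1 in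
     if real c \<ge> 1 + sqrt (real T / real m * real (su st ! i))
     then st\<lparr>tu := (tu st)[i := tu st ! i + 1], cu := (cu st)[i := 0],
             su := (su st)[i := su st ! i + c]\<rparr>
     else st\<lparr>cu := (cu st)[i := c]\<rparr>)"

definition global_upd :: "nat \<Rightarrow> cstate \<Rightarrow> cstate" where
  "global_upd T st = (let c = cf st + 1 in
     if real c \<ge> 1 + sqrt (real T * real (sf st))
     then st\<lparr>tf := tf st + 1, cf := 0, sf := sf st + c\<rparr>
     else st\<lparr>cf := c\<rparr>)"

definition step :: "nat \<Rightarrow> real \<Rightarrow> nat \<Rightarrow> (nat \<Rightarrow> real) \<Rightarrow> bool \<Rightarrow> cstate \<Rightarrow> cstate" where
  "step d \<epsilon> T x ask st = (
     let st1 = (if is_new d \<epsilon> (cs st) x then add_center x st else st);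
         i = (if is_new d \<epsilon> (cs st) x then length (cs st) else nearest d (cs st) x);
         st2 = (if ask then local_upd T i st1 else st1)
     in global_upd T st2)"

text \<open>xs t = query arriving at round t+1; ask t = whether the LLM is queried at that round.\<close>
fun run :: "nat \<Rightarrow> real \<Rightarrow> nat \<Rightarrow> (nat \<Rightarrow> nat \<Rightarrow> real) \<Rightarrow> (nat \<Rightarrow> bool) \<Rightarrow> nat \<Rightarrow> cstate" where
  "run d \<epsilon> T xs ask 0 = init_state"
| "run d \<epsilon> T xs ask (Suc t) = step d \<epsilon> T (xs t) (ask t) (run d \<epsilon> T xs ask t)"

definition local_stages :: "nat \<Rightarrow> real \<Rightarrow> nat \<Rightarrow> (nat \<Rightarrow> nat \<Rightarrow> real) \<Rightarrow> (nat \<Rightarrow> bool) \<Rightarrow> nat" where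
  "local_stages d \<epsilon> T xs ask = (let st = run d \<epsilon> T xs ask T in (\<Sum>i<length (cs st). tu st ! i))"

definition global_stage :: "nat \<Rightarrow> real \<Rightarrow> nat \<Rightarrow> (nat \<Rightarrow> nat \<Rightarrow> real) \<Rightarrow> (nat \<Rightarrow> bool) \<Rightarrow> nat" where
  "global_stage d \<epsilon> T xs ask = tf (run d \<epsilon> T xs ask T)"

end

theory Submission imports Defs begin

lemma edist_L2: "edist d x y = L2_set (\<lambda>i. x i - y i) {..<d}"
  by (simp add: edist_def L2_set_def)

lemma edist_sym: "edist d x y = edist d y x"
  by (simp add: edist_def power2_commute)

lemma edist_tri: "edist d x z \<le> edist d x y + edist d y z"
proof -
  have "edist d x z = L2_set (\<lambda>i. (x i - y i) + (y i - z i)) {..<d}"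
    by (simp add: edist_L2)
  also have "\<dots> \<le> edist d x y + edist d y z"
    unfolding edist_L2 by (rule L2_set_triangle_ineq)
  finally show ?thesis .
qed

lemma edist_cont: "continuous_on UNIV (\<lambda>y. edist d x y)"
  unfolding edist_def by (intro continuous_intros) auto

lemma open_eball: "open {y. edist d x y < r}"
proof -
  have "open ((\<lambda>y. edist d x y) -` {..<r})"
    using edist_cont[of d x] by (simp add: continuous_on_open_vimage)
  then show ?thesis by (simp add: vimage_def)
qed

definition sep :: "nat \<Rightarrow> real \<Rightarrow> (nat \<Rightarrow> real) set \<Rightarrow> bool" where
  "sep d \<epsilon> S = (\<forall>x\<in>S. \<forall>y\<in>S. x \<noteq> y \<longrightarrow> edist d x y > \<epsilon>)"

lemma sep_bounded:
  assumes "compact X" "\<epsilon> > 0"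
  shows "\<exists>B. \<forall>S. finite S \<and> S \<subseteq> X \<and> sep d \<epsilon> S \<longrightarrow> card S \<le> B"
proof -
  have "X \<subseteq> (\<Union>c\<in>X. {y. edist d c y < \<epsilon>/2})"
    using assms(2) by (auto simp: edist_def)
  then obtain F where F: "F \<subseteq> X" "finite F" "X \<subseteq> (\<Union>c\<in>F. {y. edist d c y < \<epsilon>/2})"
    using compactE_image[OF assms(1), of X "\<lambda>c. {y. edist d c y < \<epsilon>/2}"] open_eball by metis
  show ?thesis
  proof (intro exI allI impI)
    fix S assume S: "finite S \<and> S \<subseteq> X \<and> sep d \<epsilon> S"
    define f where "f s = (SOME c. c \<in> F \<and> edist d c s < \<epsilon>/2)" for s
    have f: "f s \<in> F \<and> edist d (f s) s < \<epsilon>/2" if "s \<in> S" for s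
    proof -
      have "\<exists>c. c \<in> F \<and> edist d c s < \<epsilon>/2" using that S F(3) by blast
      then show ?thesis unfolding f_def by (rule someI_ex)
    qed
    have "inj_on f S"
    proof (rule inj_onI, rule ccontr)
      fix s t assume st: "s \<in> S" "t \<in> S" "f s = f t" "s \<noteq> t"
      have "edist d s t \<le> edist d s (f s) + edist d (f s) t" by (rule edist_tri)
      also have "\<dots> < \<epsilon>" using f[OF st(1)] f[OF st(2)] st(3) edist_sym[of d s "f s"] by simp
      finally show False using S st unfolding sep_def by force
    qed
    then show "card S \<le> card F"
      using card_inj_on_le[of f S F] f F(2) by blast
  qed
qed

lemma sep_card_le_mmax:
  assumes "compact X" "\<epsilon> > 0" "finite S" "S \<subseteq> X" "sep d \<epsilon> S"
  shows "card S \<le> mmax d X \<epsilon>"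
proof -
  obtain B where B: "\<And>S. finite S \<and> S \<subseteq> X \<and> sep d \<epsilon> S \<Longrightarrow> card S \<le> B"
    using sep_bounded[OF assms(1,2)] by blast
  have bdd: "bdd_above {card S | S. finite S \<and> S \<subseteq> X \<and>
       (\<forall>x\<in>S. \<forall>y\<in>S. x \<noteq> y \<longrightarrow> edist d x y > \<epsilon>)}"
    using B unfolding sep_def bdd_above_def by blast
  show ?thesis unfolding mmax_def
    by (rule cSup_upper[OF _ bdd]) (use assms in \<open>auto simp: sep_def\<close>)
qed

lemma mmax_pos:
  assumes "compact X" "\<epsilon> > 0" "x \<in> X"
  shows "1 \<le> mmax d X \<epsilon>"
  using sep_card_le_mmax[OF assms(1,2), of "{x}" d] assms(3) by (simp add: sep_def)


definition Qp :: "real \<Rightarrow> real \<Rightarrow> real" where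
  "Qp R s = - log 2 (max (ln (R / s)) (ln 4))"

definition Pot :: "real \<Rightarrow> real \<Rightarrow> real" where
  "Pot R s = (if s < 1 then Qp R 1 - 1 else Qp R s) + 4 * sqrt (s / R)"

lemma ln4_pos: "0 < ln (4::real)" by simp

lemma Qp_mono:
  assumes "R > 0" "1 \<le> s" "s \<le> s'"
  shows "Qp R s \<le> Qp R s'"
proof -
  have "ln (R / s') \<le> ln (R / s)"
    using assms by (intro ln_mono) (auto intro: divide_left_mono)
  then have "max (ln (R / s')) (ln 4) \<le> max (ln (R / s)) (ln 4)" by simp
  moreover have "0 < max (ln (R / s')) (ln 4)" using ln4_pos by (simp add: less_max_iff_disj)
  ultimately have "log 2 (max (ln (R / s')) (ln 4)) \<le> log 2 (max (ln (R / s)) (ln 4))"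
    by (intro log_mono) auto
  then show ?thesis unfolding Qp_def by simp
qed

lemma Qp_le: "Qp R s \<le> - log 2 (ln 4)"
proof -
  have "log 2 (ln 4) \<le> log 2 (max (ln (R / s)) (ln 4))"
    using ln4_pos by (intro log_mono) auto
  then show ?thesis unfolding Qp_def by simp
qed

lemma Pot_le: "Pot R s \<le> - log 2 (ln 4) + 4 * sqrt (s / R)"
  unfolding Pot_def using Qp_le[of R s] Qp_le[of R 1] by auto

lemma Pot_0: "Pot R 0 = - log 2 (max (ln R) (ln 4)) - 1"
  by (simp add: Pot_def Qp_def)

lemma sqrt_part:
  assumes "R > 0" "s \<ge> 0" "s' \<ge> s + sqrt (R * s)" "R \<le> 16 * s"
  shows "sqrt (s' / R) \<ge> sqrt (s / R) + 1/4"
proof -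
  have sR: "sqrt R \<le> 4 * sqrt s"
  proof -
    have "sqrt R \<le> sqrt (16 * s)" using assms(4) by simp
    also have "\<dots> = 4 * sqrt s" by (simp add: real_sqrt_mult)
    finally show ?thesis .
  qed
  have "(sqrt s + sqrt R / 4)^2 = s + sqrt s * sqrt R / 2 + R / 16"
    using assms by (simp add: power2_eq_square algebra_simps)
  also have "R / 16 = sqrt R * sqrt R / 16" using assms by simp
  also have "\<dots> \<le> sqrt R * (4 * sqrt s) / 16"
    using sR assms(1) by (intro divide_right_mono mult_left_mono) auto
  finally have "(sqrt s + sqrt R / 4)^2 \<le> s + sqrt R * sqrt s * 3 / 4"
    by (simp add: algebra_simps)
  moreover have "0 \<le> sqrt R * sqrt s" using assms by simp
  ultimately have "(sqrt s + sqrt R / 4)^2 \<le> s + sqrt (R * s)"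
    by (simp add: real_sqrt_mult)
  also have "\<dots> \<le> s'" by fact
  finally have "sqrt s + sqrt R / 4 \<le> sqrt s'"
    using real_le_rsqrt by blast
  then have "(sqrt s + sqrt R / 4) / sqrt R \<le> sqrt s' / sqrt R"
    using assms by (intro divide_right_mono) auto
  then show ?thesis using assms by (simp add: real_sqrt_divide add_divide_distrib)
qed

lemma Pot_step:
  assumes R: "R > 0" and s: "s = 0 \<or> s \<ge> 1" and s': "s' \<ge> s + 1 + sqrt (R * s)"
  shows "Pot R s' \<ge> Pot R s + 1"
proof -
  have "sqrt (R * s) \<ge> 0" using R s by auto
  then have s's: "s \<le> s'" using s' by linarith
  have sqm: "sqrt (s / R) \<le> sqrt (s' / R)"
    using R s's by (intro real_sqrt_le_mono divide_right_mono) auto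
  show ?thesis
  proof (cases "s = 0")
    case True
    then have "s' \<ge> 1" using s' by simp
    moreover have "0 \<le> sqrt (s' / R)" using R \<open>s' \<ge> 1\<close> by simp
    moreover have "Pot R s' = Qp R s' + 4 * sqrt (s' / R)" using \<open>s' \<ge> 1\<close> by (simp add: Pot_def)
    moreover have "Pot R s = Qp R 1 - 1" using True by (simp add: Pot_def)
    ultimately show ?thesis using Qp_mono[OF R order_refl \<open>s' \<ge> 1\<close>] by linarith
  next
    case False
    then have s1: "s \<ge> 1" using s by auto
    have s'1: "\<not> s' < 1" using s1 s's by simp
    have Ps: "Pot R s = Qp R s + 4 * sqrt (s / R)" using s1 by (simp add: Pot_def)
    have Ps': "Pot R s' = Qp R s' + 4 * sqrt (s' / R)" using s'1 by (simp add: Pot_def)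
    show ?thesis
    proof (cases "R \<le> 16 * s")
      case True
      have "sqrt (s' / R) \<ge> sqrt (s / R) + 1/4"
        using sqrt_part[OF R _ _ True] s1 s' by simp
      then show ?thesis using Qp_mono[OF R s1 s's] Ps Ps' by linarith
    next
      case False
      then have big: "ln (R / s) > ln 16" using s1 by (simp add: field_simps)
      have s'pos: "s' > 0" using s1 s's by simp
      have geo: "s' \<ge> sqrt (R * s)" using s' s1 by simp
      have "R / s' \<le> R / sqrt (R * s)"
        using geo R s1 s'pos by (intro divide_left_mono) (auto intro!: mult_pos_pos)
      also have "R / sqrt (R * s) = sqrt (R / s)"
        using R s1 by (simp add: real_sqrt_mult real_sqrt_divide field_simps)
      finally have "ln (R / s') \<le> ln (sqrt (R / s))"
        using R s'pos by (intro ln_mono) auto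
      also have "\<dots> = ln (R / s) / 2"
        using R s1 by (simp add: ln_sqrt)
      finally have l1: "ln (R / s') \<le> ln (R / s) / 2" .
      have l16: "ln (16::real) = 2 * ln 4"
      proof -
        have "ln (16::real) = ln (4 * 4)" by simp
        also have "\<dots> = 2 * ln 4" by (subst ln_mult) auto
        finally show ?thesis .
      qed
      have m1: "max (ln (R / s')) (ln 4) \<le> ln (R / s) / 2"
        using l1 big l16 by simp
      have m2: "max (ln (R / s)) (ln 4) = ln (R / s)"
      proof -
        have "ln 4 < ln (R / s)" using big l16 ln4_pos by linarith
        then show ?thesis by (simp add: max_def)
      qed
      have "log 2 (max (ln (R / s')) (ln 4)) \<le> log 2 (ln (R / s) / 2)"
        using m1 ln4_pos by (intro log_mono) (auto simp: less_max_iff_disj)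
      also have "\<dots> = log 2 (ln (R / s)) - 1"
        using big ln4_pos l16 by (subst log_divide) auto
      finally have "Qp R s' \<ge> Qp R s + 1"
        unfolding Qp_def m2 by simp
      then show ?thesis using sqm Ps Ps' by linarith
    qed
  qed
qed


lemma sum_upd:
  fixes f g :: "nat \<Rightarrow> nat"
  assumes "i < n" "\<And>j. j < n \<Longrightarrow> j \<noteq> i \<Longrightarrow> g j = f j"
  shows "(\<Sum>j<n. g j) + f i = (\<Sum>j<n. f j) + g i"
proof -
  have "(\<Sum>j<n. g j) = g i + (\<Sum>j\<in>{..<n}-{i}. g j)" using assms(1) by (simp add: sum.remove)
  moreover have "(\<Sum>j<n. f j) = f i + (\<Sum>j\<in>{..<n}-{i}. f j)" using assms(1) by (simp add: sum.remove)
  moreover have "(\<Sum>j\<in>{..<n}-{i}. g j) = (\<Sum>j\<in>{..<n}-{i}. f j)" using assms(2) by (intro sum.cong) auto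
  ultimately show ?thesis by simp
qed

lemma global_upd_loc [simp]:
  "cs (global_upd T st) = cs st" "tu (global_upd T st) = tu st"
  "cu (global_upd T st) = cu st" "su (global_upd T st) = su st"
  by (simp_all add: global_upd_def Let_def)

lemma local_upd_glob [simp]:
  "tf (local_upd T i st) = tf st" "cf (local_upd T i st) = cf st"
  "sf (local_upd T i st) = sf st" "cs (local_upd T i st) = cs st"
  by (simp_all add: local_upd_def Let_def)

lemma add_center_glob [simp]:
  "tf (add_center x st) = tf st" "cf (add_center x st) = cf st"
  "sf (add_center x st) = sf st" "cs (add_center x st) = cs st @ [x]"
  "tu (add_center x st) = tu st @ [1]" "cu (add_center x st) = cu st @ [0]"
  "su (add_center x st) = su st @ [0]"
  by (simp_all add: add_center_def)

definition ginv :: "nat \<Rightarrow> nat \<Rightarrow> cstate \<Rightarrow> bool" where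
  "ginv T t st = (real (tf st) \<le> Pot (real T) (real (sf st)) - Pot (real T) 0 + 1 \<and> sf st + cf st = t)"

lemma ginv_init: "ginv T 0 init_state"
  by (simp add: ginv_def init_state_def)

lemma ginv_step:
  assumes "T \<ge> 1" "ginv T t st"
  shows "ginv T (Suc t) (global_upd T st)"
proof -
  have e: "sf st + cf st = t" using assms(2) unfolding ginv_def by simp
  have I: "real (tf st) \<le> Pot (real T) (real (sf st)) - Pot (real T) 0 + 1"
    using assms(2) unfolding ginv_def by simp
  show ?thesis
  proof (cases "real (cf st + 1) \<ge> 1 + sqrt (real T * real (sf st))")
    case True
    have "Pot (real T) (real (sf st) + real (cf st + 1)) \<ge> Pot (real T) (real (sf st)) + 1"
      using True assms(1) by (intro Pot_step) auto
    then have "real (tf st + 1) \<le> Pot (real T) (real (sf st) + real (cf st + 1)) - Pot (real T) 0 + 1"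
      using I by simp
    then have "real (tf st + 1) \<le> Pot (real T) (real (sf st + (cf st + 1))) - Pot (real T) 0 + 1"
      by (simp only: of_nat_add)
    moreover have "global_upd T st = st\<lparr>tf := tf st + 1, cf := 0, sf := sf st + (cf st + 1)\<rparr>"
      using True by (simp add: global_upd_def Let_def)
    ultimately show ?thesis using e by (simp add: ginv_def)
  next
    case False
    then have "global_upd T st = st\<lparr>cf := cf st + 1\<rparr>"
      by (simp add: global_upd_def Let_def)
    then show ?thesis using e I by (simp add: ginv_def)
  qed
qed

locale setting =
  fixes d :: nat and \<epsilon> :: real and X :: "(nat \<Rightarrow> real) set" and T :: nat
  assumes cX: "compact X" and eps: "\<epsilon> > 0" and T1: "T \<ge> 1" and Xne: "X \<noteq> {}"
begin

definition Mm where "Mm = mmax d X \<epsilon>"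
definition R where "R = real T / real Mm"

lemma M1: "Mm \<ge> 1" using mmax_pos[OF cX eps] Xne unfolding Mm_def by blast

lemma Rpos: "R > 0" using M1 T1 unfolding R_def by simp

definition linv :: "nat \<Rightarrow> cstate \<Rightarrow> bool" where
  "linv t st = (length (tu st) = length (cs st) \<and> length (cu st) = length (cs st) \<and>
     length (su st) = length (cs st) \<and> set (cs st) \<subseteq> X \<and> distinct (cs st) \<and>
     sep d \<epsilon> (set (cs st)) \<and>
     (\<forall>i<length (cs st). real (tu st ! i) \<le> Pot R (real (su st ! i)) - Pot R 0 + 1) \<and>
     (\<Sum>i<length (cs st). su st ! i + cu st ! i) \<le> t)"

lemma linv_init: "linv 0 init_state"
  by (simp add: linv_def init_state_def sep_def)

lemma linv_len: "linv t st \<Longrightarrow> length (cs st) \<le> Mm"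
  unfolding linv_def Mm_def
  using sep_card_le_mmax[OF cX eps, of "set (cs st)" d] distinct_card by fastforce

lemma linv_mono: "linv t st \<Longrightarrow> t \<le> t' \<Longrightarrow> linv t' st"
  unfolding linv_def by auto

lemma linv_add:
  assumes "linv t st" "x \<in> X" "is_new d \<epsilon> (cs st) x"
  shows "linv t (add_center x st)"
proof -
  let ?n = "length (cs st)"
  have "edist d x x = 0" by (simp add: edist_def)
  then have xn: "x \<notin> set (cs st)" using assms(3) eps unfolding is_new_def by force
  have sep': "sep d \<epsilon> (set (cs st @ [x]))"
    using assms(1,3) unfolding linv_def sep_def is_new_def
    by (auto simp: edist_sym)
  have sums: "(\<Sum>i<Suc ?n. (su st @ [0]) ! i + (cu st @ [0]) ! i) = (\<Sum>i<?n. su st ! i + cu st ! i)"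
    using assms(1) unfolding linv_def by (simp add: nth_append)
  show ?thesis using assms(1,2) xn sep' sums unfolding linv_def
    by (auto simp: nth_append less_Suc_eq)
qed

lemma linv_local:
  assumes "linv t st" "i < length (cs st)"
  shows "linv (Suc t) (local_upd T i st)"
proof -
  let ?n = "length (cs st)" and ?m = "length (cs st)"
  define c where "c = cu st ! i + 1"
  have L: "length (tu st) = ?n" "length (cu st) = ?n" "length (su st) = ?n"
    using assms(1) unfolding linv_def by auto
  have mM: "?m \<le> Mm" using linv_len[OF assms(1)] .
  have m1: "?m \<ge> 1" using assms(2) by simp
  have sumt: "(\<Sum>j<?n. su st ! j + cu st ! j) \<le> t" using assms(1) unfolding linv_def by auto
  show ?thesis
  proof (cases "real c \<ge> 1 + sqrt (real T / real ?m * real (su st ! i))")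
    case True
    have "R \<le> real T / real ?m"
    proof -
      have "0 < real Mm * real ?m" using M1 m1 by (intro mult_pos_pos) auto
      then show ?thesis unfolding R_def using mM by (intro divide_left_mono) auto
    qed
    then have "sqrt (R * real (su st ! i)) \<le> sqrt (real T / real ?m * real (su st ! i))"
      by (intro real_sqrt_le_mono mult_right_mono) auto
    then have "real (su st ! i) + real c \<ge> real (su st ! i) + 1 + sqrt (R * real (su st ! i))"
      using True by linarith
    then have Pst: "Pot R (real (su st ! i) + real c) \<ge> Pot R (real (su st ! i)) + 1"
      using Rpos by (intro Pot_step) auto
    have inv_i: "\<forall>j<?n. real (tu st ! j) \<le> Pot R (real (su st ! j)) - Pot R 0 + 1"
      using assms unfolding linv_def by auto
    have S: "(\<Sum>j<?n. (su st)[i := su st ! i + c] ! j + (cu st)[i := 0] ! j)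
        + (su st ! i + cu st ! i) = (\<Sum>j<?n. su st ! j + cu st ! j) + ((su st)[i := su st ! i + c] ! i + (cu st)[i := 0] ! i)"
      using assms(2) L by (intro sum_upd[where f = "\<lambda>j. su st ! j + cu st ! j"
            and g = "\<lambda>j. (su st)[i := su st ! i + c] ! j + (cu st)[i := 0] ! j"]) auto
    define st' where "st' = local_upd T i st"
    have F: "cs st' = cs st" "tu st' = (tu st)[i := tu st ! i + 1]" "cu st' = (cu st)[i := 0]"
        "su st' = (su st)[i := su st ! i + c]"
      using True by (simp_all add: st'_def local_upd_def Let_def c_def)
    have "\<forall>j<?n. real (tu st' ! j) \<le> Pot R (real (su st' ! j)) - Pot R 0 + 1"
    proof (intro allI impI)
      fix j assume "j < ?n"
      then show "real (tu st' ! j) \<le> Pot R (real (su st' ! j)) - Pot R 0 + 1"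
        using inv_i Pst L unfolding F by (cases "j = i") auto
    qed
    moreover have "(\<Sum>j<?n. su st' ! j + cu st' ! j) \<le> Suc t"
      using S sumt L assms(2) unfolding F c_def by simp
    ultimately have "linv (Suc t) st'"
      using assms(1) L unfolding linv_def F by simp
    then show ?thesis by (simp add: st'_def)
  next
    case False
    have S: "(\<Sum>j<?n. su st ! j + (cu st)[i := c] ! j)
        + (su st ! i + cu st ! i) = (\<Sum>j<?n. su st ! j + cu st ! j) + (su st ! i + (cu st)[i := c] ! i)"
      using assms(2) L by (intro sum_upd[where f = "\<lambda>j. su st ! j + cu st ! j"
            and g = "\<lambda>j. su st ! j + (cu st)[i := c] ! j"]) auto
    define st' where "st' = local_upd T i st"
    have F: "cs st' = cs st" "tu st' = tu st" "cu st' = (cu st)[i := c]" "su st' = su st"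
      using False by (simp_all add: st'_def local_upd_def Let_def c_def)
    have "(\<Sum>j<?n. su st' ! j + cu st' ! j) \<le> Suc t"
      using S sumt L assms(2) unfolding F c_def by simp
    then have "linv (Suc t) st'"
      using assms(1) L unfolding linv_def F by simp
    then show ?thesis by (simp add: st'_def)
  qed
qed

end

lemma nearest_lt:
  assumes "C \<noteq> []"
  shows "nearest d C x < length C"
proof -
  let ?f = "\<lambda>j. edist d x (C ! j)"
  let ?A = "?f ` {..<length C}"
  have fin: "finite ?A" and ne: "?A \<noteq> {}" using assms by auto
  obtain i where i: "i < length C" "?f i = Min ?A" using Min_in[OF fin ne] by auto
  have "\<forall>j<length C. ?f i \<le> ?f j" using i(2) fin by auto
  then have "i < length C \<and> (\<forall>j<length C. edist d x (C!i) \<le> edist d x (C!j))" using i(1) by simp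
  then show ?thesis unfolding nearest_def by (rule LeastI2) auto
qed

context setting
begin

lemma linv_global [simp]: "linv t (global_upd T' st) = linv t st"
  by (simp add: linv_def)

lemma linv_step:
  assumes "linv t st" "x \<in> X"
  shows "linv (Suc t) (step d \<epsilon> T x ask st)"
proof -
  define st1 where "st1 = (if is_new d \<epsilon> (cs st) x then add_center x st else st)"
  define i where "i = (if is_new d \<epsilon> (cs st) x then length (cs st) else nearest d (cs st) x)"
  have l1: "linv t st1" using assms linv_add unfolding st1_def by auto
  have ilt: "i < length (cs st1)"
  proof (cases "is_new d \<epsilon> (cs st) x")
    case True then show ?thesis by (simp add: i_def st1_def)
  next
    case False
    then have "cs st \<noteq> []" by (auto simp: is_new_def)
    then show ?thesis using False by (simp add: i_def st1_def nearest_lt)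
  qed
  have "linv (Suc t) (if ask then local_upd T i st1 else st1)"
    using l1 linv_local[OF l1 ilt] linv_mono[OF l1] by auto
  then show ?thesis
    unfolding step_def Let_def st1_def[symmetric] i_def[symmetric] by simp
qed

lemma ginv_step':
  assumes "ginv T t st"
  shows "ginv T (Suc t) (step d \<epsilon> T x ask st)"
proof -
  define st1 where "st1 = (if is_new d \<epsilon> (cs st) x then add_center x st else st)"
  define i where "i = (if is_new d \<epsilon> (cs st) x then length (cs st) else nearest d (cs st) x)"
  define st2 where "st2 = (if ask then local_upd T i st1 else st1)"
  have "tf st2 = tf st" "sf st2 = sf st" "cf st2 = cf st"
    unfolding st2_def st1_def by auto
  then have "ginv T t st2" using assms by (simp add: ginv_def)
  then have "ginv T (Suc t) (global_upd T st2)" using ginv_step T1 by blast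
  then show ?thesis
    unfolding step_def Let_def st1_def[symmetric] i_def[symmetric] st2_def[symmetric] .
qed

lemma run_inv:
  assumes "\<forall>t<T. xs t \<in> X"
  shows "t \<le> T \<Longrightarrow> linv t (run d \<epsilon> T xs ask t) \<and> ginv T t (run d \<epsilon> T xs ask t)"
proof (induction t)
  case 0 then show ?case by (simp add: linv_init ginv_init)
next
  case (Suc t)
  then show ?case using assms linv_step ginv_step' by simp
qed

end

lemma ln4_ge1: "1 \<le> ln (4::real)"
proof -
  have "exp 1 \<le> (4::real)" using e_less_272 by simp
  then have "ln (exp 1) \<le> ln (4::real)" by (intro ln_mono) auto
  then show ?thesis by simp
qed

lemma log_ln4_nonneg: "0 \<le> log 2 (ln (4::real))"
  using ln4_ge1 by simp

lemma sqrt_amgm: "0 \<le> y \<Longrightarrow> sqrt y \<le> (y + 1) / 2"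
proof -
  assume y: "0 \<le> y"
  have "0 \<le> (sqrt y - 1)^2" by simp
  then show ?thesis using y by (simp add: power2_eq_square algebra_simps)
qed

locale setting2 = setting +
  assumes T27: "T \<ge> 27"
begin

lemma lnT: "ln (real T) \<ge> 3"
proof -
  have "exp 1 \<le> (3::real)" using e_less_272 by simp
  then have "1 \<le> ln (3::real)" using ln_mono[of "exp 1" 3] by simp
  have "ln (27::real) = ln (3^3)" by simp
  also have "\<dots> = 3 * ln 3" by (subst ln_realpow) auto
  finally have "ln (27::real) \<ge> 3" using \<open>1 \<le> ln 3\<close> by simp
  moreover have "ln (27::real) \<le> ln (real T)" using T27 by (intro ln_mono) auto
  ultimately show ?thesis by simp
qed

lemma LL1: "1 \<le> ln (ln (real T))"
proof -
  have "exp 1 \<le> (3::real)" using e_less_272 by simp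
  then have "ln (exp 1) \<le> ln (ln (real T))" using lnT by (intro ln_mono) auto
  then show ?thesis by simp
qed

lemma logb:
  assumes "0 < r" "r \<le> real T"
  shows "log 2 (max (ln r) (ln 4)) \<le> 3/2 * ln (ln (real T))"
proof -
  have "ln r \<le> ln (real T)" using assms by (intro ln_mono) auto
  moreover have "ln 4 \<le> ln (real T)" using T27 by (intro ln_mono) auto
  ultimately have m: "max (ln r) (ln 4) \<le> ln (real T)" by simp
  have "log 2 (max (ln r) (ln 4)) \<le> log 2 (ln (real T))"
    using m ln4_ge1 by (intro log_mono) (auto simp: less_max_iff_disj)
  also have "\<dots> = ln (ln (real T)) / ln 2" by (simp add: log_def)
  also have "\<dots> \<le> ln (ln (real T)) / (2/3)"
    using LL1 ln2_ge_two_thirds by (intro divide_left_mono) auto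
  finally show ?thesis by simp
qed

lemma tu_bound:
  assumes "real k \<le> Pot r s - Pot r 0 + 1" "0 < r" "r \<le> real T"
  shows "real k \<le> 4 * sqrt (s / r) + 3/2 * ln (ln (real T)) + 2"
  using assms(1) Pot_le[of r s] Pot_0[of r] logb[OF assms(2,3)] log_ln4_nonneg by linarith

lemma global_bound:
  assumes "ginv T T st"
  shows "real (tf st) \<le> 8 * ln (ln (real T))"
proof -
  have sf: "sf st \<le> T" using assms unfolding ginv_def by auto
  have "real (tf st) \<le> 4 * sqrt (real (sf st) / real T) + 3/2 * ln (ln (real T)) + 2"
    using assms T1 unfolding ginv_def by (intro tu_bound) auto
  moreover have "sqrt (real (sf st) / real T) \<le> 1" using sf T1 by simp
  ultimately show ?thesis using LL1 by linarith
qed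

lemma RleT: "R \<le> real T"
  unfolding R_def using M1 by (simp add: divide_le_eq mult_le_cancel_left1)

lemma local_bound:
  assumes "linv T st"
  shows "real (\<Sum>i<length (cs st). tu st ! i) \<le> 8 * real Mm * ln (ln (real T))"
proof -
  let ?n = "length (cs st)"
  let ?L = "ln (ln (real T))"
  have n: "?n \<le> Mm" using linv_len[OF assms] .
  have each: "real (tu st ! i) \<le> 2 * (real (su st ! i) * real Mm / real T + 1) + 3/2 * ?L + 2"
    if "i < ?n" for i
  proof -
    have "real (tu st ! i) \<le> 4 * sqrt (real (su st ! i) / R) + 3/2 * ?L + 2"
      using assms that Rpos RleT unfolding linv_def by (intro tu_bound) auto
    moreover have "real (su st ! i) / R = real (su st ! i) * real Mm / real T"
      unfolding R_def using M1 T1 by simp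
    moreover have "sqrt (real (su st ! i) * real Mm / real T) \<le> (real (su st ! i) * real Mm / real T + 1) / 2"
      by (rule sqrt_amgm) simp
    ultimately show ?thesis by simp
  qed
  have ssum: "(\<Sum>i<?n. su st ! i) \<le> T"
  proof -
    have "(\<Sum>i<?n. su st ! i) \<le> (\<Sum>i<?n. su st ! i + cu st ! i)" by (intro sum_mono) auto
    also have "\<dots> \<le> T" using assms unfolding linv_def by auto
    finally show ?thesis .
  qed
  have "real (\<Sum>i<?n. tu st ! i) = (\<Sum>i<?n. real (tu st ! i))" by simp
  also have "\<dots> \<le> (\<Sum>i<?n. 2 * (real (su st ! i) * real Mm / real T + 1) + 3/2 * ?L + 2)"
    using each by (intro sum_mono) auto
  also have "\<dots> = 2 * (real Mm / real T) * real (\<Sum>i<?n. su st ! i) + real ?n * (4 + 3/2 * ?L)"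
    by (simp add: sum.distrib sum_distrib_left sum_divide_distrib algebra_simps)
  also have "\<dots> \<le> 2 * (real Mm / real T) * real T + real Mm * (4 + 3/2 * ?L)"
  proof (intro add_mono mult_left_mono mult_right_mono)
    show "real (\<Sum>i<?n. su st ! i) \<le> real T" using ssum by (metis of_nat_le_iff)
    show "real ?n \<le> real Mm" using n by simp
  qed (use LL1 in auto)
  also have "\<dots> = real Mm * (6 + 3/2 * ?L)" using T1 by (simp add: algebra_simps)
  also have "\<dots> \<le> real Mm * (8 * ?L)" using LL1 by (intro mult_left_mono) auto
  finally show ?thesis by simp
qed

end

lemma int_bound:
  fixes f :: "'a \<Rightarrow> real"
  assumes "prob_space M" "\<forall>\<omega>\<in>space M. f \<omega> \<le> c" "0 \<le> c"
  shows "(\<integral>\<omega>. f \<omega> \<partial>M) \<le> c"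
proof (cases "integrable M f")
  case True
  then show ?thesis using prob_space.integral_le_const[OF assms(1) True] assms(2)
    by (simp add: AE_I2)
next
  case False
  then show ?thesis using assms(3) by (simp add: not_integrable_integral_eq)
qed

theorem mainTheorem7:
  shows "\<exists>C T0. \<forall>(M :: ((nat \<Rightarrow> nat \<Rightarrow> real) \<times> (nat \<Rightarrow> bool)) measure)
      (d :: nat) (X :: (nat \<Rightarrow> real) set) (\<epsilon> :: real) (T :: nat).
      prob_space M \<and> compact X \<and> X \<noteq> {} \<and> X \<subseteq> {x. \<forall>i\<ge>d. x i = 0} \<and> \<epsilon> > 0 \<and> T \<ge> T0 \<and>
      (\<forall>\<omega>\<in>space M. \<forall>t<T. fst \<omega> t \<in> X)
      \<longrightarrow> (\<integral>\<omega>. real (local_stages d \<epsilon> T (fst \<omega>) (snd \<omega>)) \<partial>M)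
              \<le> C * real (mmax d X \<epsilon>) * ln (ln (real T))
        \<and> (\<integral>\<omega>. real (global_stage d \<epsilon> T (fst \<omega>) (snd \<omega>)) \<partial>M) \<le> C * ln (ln (real T))"
proof (rule exI[of _ "8::real"], rule exI[of _ "27::nat"], intro allI impI)
  fix M :: "((nat \<Rightarrow> nat \<Rightarrow> real) \<times> (nat \<Rightarrow> bool)) measure"
    and d :: nat and X :: "(nat \<Rightarrow> real) set" and \<epsilon> :: real and T :: nat
  assume H: "prob_space M \<and> compact X \<and> X \<noteq> {} \<and> X \<subseteq> {x. \<forall>i\<ge>d. x i = 0} \<and> \<epsilon> > 0 \<and> T \<ge> 27 \<and>
      (\<forall>\<omega>\<in>space M. \<forall>t<T. fst \<omega> t \<in> X)"
  then have ps: "prob_space M" and cX: "compact X" and Xne: "X \<noteq> {}" and eps: "\<epsilon> > 0"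
    and T27: "T \<ge> 27" and xs: "\<forall>\<omega>\<in>space M. \<forall>t<T. fst \<omega> t \<in> X" by auto
  interpret setting2 d \<epsilon> X T
    by unfold_locales (use cX eps T27 Xne in auto)
  have inv: "linv T (run d \<epsilon> T (fst \<omega>) (snd \<omega>) T) \<and> ginv T T (run d \<epsilon> T (fst \<omega>) (snd \<omega>) T)"
    if "\<omega> \<in> space M" for \<omega>
    using run_inv[of "fst \<omega>" T "snd \<omega>"] xs that by auto
  have p1: "\<forall>\<omega>\<in>space M. real (local_stages d \<epsilon> T (fst \<omega>) (snd \<omega>)) \<le> 8 * real (mmax d X \<epsilon>) * ln (ln (real T))"
    using inv local_bound unfolding local_stages_def Let_def Mm_def by auto
  have p2: "\<forall>\<omega>\<in>space M. real (global_stage d \<epsilon> T (fst \<omega>) (snd \<omega>)) \<le> 8 * ln (ln (real T))"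
    using inv global_bound unfolding global_stage_def by auto
  show "(\<integral>\<omega>. real (local_stages d \<epsilon> T (fst \<omega>) (snd \<omega>)) \<partial>M)
              \<le> 8 * real (mmax d X \<epsilon>) * ln (ln (real T))
        \<and> (\<integral>\<omega>. real (global_stage d \<epsilon> T (fst \<omega>) (snd \<omega>)) \<partial>M) \<le> 8 * ln (ln (real T))"
    using int_bound[OF ps p1] int_bound[OF ps p2] LL1 by auto
qed

end
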